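(* Let $\mathcal{U}$ be a selective nonprincipal ultrafilter on $\mathbb{N}$, let $X$ be an infinite-dimensional reflexive Banach space, and let $(T_n)_{n\ge1}$ be a bounded sequence in $B(X)$. Then the ultraproduct $(T_1,T_2,\ldots)_{\mathcal{U}}$ is not equal to $I\oplus0$ with respect to the decomposition $X^{\mathcal{U}}=X\oplus\widehat{X}$ (i.e. it is not the operator that is the identity on $X$ and zero on $\widehat{X}$).
   Context: $X^{\mathcal{U}}$ is the ultrapower of $X$, $(x_n)_{n,\mathcal{U}}$ the class of a bounded sequence; $X$ is identified with constant classes and $\widehat{X}=\{(x_n)_{n,\mathcal{U}}:w\text{-}\lim_{n,\mathcal{U}}x_n=0\}$, so $X^{\mathcal{U}}=X\oplus\widehat{X}$. The ultraproduct is $(T_1,T_2,\ldots)_{\mathcal{U}}(x_n)_{n,\mathcal{U}}=(T_nx_n)_{n,\mathcal{U}}$. An ultrafilter $\mathcal{U}$ on $\mathbb{N}$ is selective if (1) for every sequence $A_1,A_2,\dots$ in $\mathcal{U}$ there is $A\in\mathcal{U}$ with $A\setminus A_k$ finite for each $k$; and (2) for every partition of $\mathbb{N}$ into finite sets $A_1,A_2,\dots$ there is $A\in\mathcal{U}$ with $A\cap A_k$ a singleton for each $k$. *)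

theory Defs
  imports "HOL-Analysis.Analysis"
begin

definition is_ultrafilter :: "nat set set \<Rightarrow> bool" where
  "is_ultrafilter U \<longleftrightarrow>
     UNIV \<in> U \<and> {} \<notin> U \<and>
     (\<forall>A B. A \<in> U \<and> A \<subseteq> B \<longrightarrow> B \<in> U) \<and>
     (\<forall>A B. A \<in> U \<and> B \<in> U \<longrightarrow> A \<inter> B \<in> U) \<and>
     (\<forall>A. A \<in> U \<or> - A \<in> U)"

definition nonprincipal :: "nat set set \<Rightarrow> bool" where
  "nonprincipal U \<longleftrightarrow> (\<forall>n. {n} \<notin> U)"

definition selective :: "nat set set \<Rightarrow> bool" where
  "selective U \<longleftrightarrow>
     (\<forall>A :: nat \<Rightarrow> nat set. (\<forall>k. A k \<in> U) \<longrightarrow>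
        (\<exists>B\<in>U. \<forall>k. finite (B - A k))) \<and>
     (\<forall>A :: nat \<Rightarrow> nat set.
        (\<forall>k. finite (A k) \<and> A k \<noteq> {}) \<and>
        (\<forall>j k. j \<noteq> k \<longrightarrow> A j \<inter> A k = {}) \<and>
        (\<Union>k. A k) = UNIV \<longrightarrow>
        (\<exists>B\<in>U. \<forall>k. \<exists>m. B \<inter> A k = {m}))"

definition infinite_dimensional :: "'a::real_vector itself \<Rightarrow> bool" where
  "infinite_dimensional (TYPE('a)) \<longleftrightarrow> \<not> (\<exists>S::'a set. finite S \<and> span S = UNIV)"

definition reflexive_space :: "'a::banach itself \<Rightarrow> bool" where
  "reflexive_space (TYPE('a)) \<longleftrightarrow>
     (\<forall>\<phi> :: ('a \<Rightarrow>\<^sub>L real) \<Rightarrow>\<^sub>L real. \<exists>x::'a. \<forall>f. blinfun_apply \<phi> f = blinfun_apply f x)"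

definition bounded_seq :: "(nat \<Rightarrow> 'a::real_normed_vector) \<Rightarrow> bool" where
  "bounded_seq x \<longleftrightarrow> (\<exists>M. \<forall>n. norm (x n) \<le> M)"

text \<open>Equality of classes in the ultrapower: (x_n)_U = (y_n)_U iff lim_U ||x_n - y_n|| = 0.\<close>
definition ueq :: "nat set set \<Rightarrow> (nat \<Rightarrow> 'a::real_normed_vector) \<Rightarrow> (nat \<Rightarrow> 'a) \<Rightarrow> bool" where
  "ueq U x y \<longleftrightarrow> (\<forall>e>0. {n. norm (x n - y n) < e} \<in> U)"

definition weak_ulim :: "nat set set \<Rightarrow> (nat \<Rightarrow> 'a::real_normed_vector) \<Rightarrow> 'a \<Rightarrow> bool" where
  "weak_ulim U x l \<longleftrightarrow>
     (\<forall>f :: 'a \<Rightarrow>\<^sub>L real. \<forall>e>0. {n. \<bar>blinfun_apply f (x n) - blinfun_apply f l\<bar> < e} \<in> U)"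

text \<open>The ultraproduct (T_1,T_2,...)_U equals I \<oplus> 0 w.r.t. X^U = X \<oplus> X-hat:
  identity on the constant classes X and zero on X-hat.\<close>
definition ultraproduct_is_I_plus_0 ::
  "nat set set \<Rightarrow> (nat \<Rightarrow> ('a::banach \<Rightarrow>\<^sub>L 'a)) \<Rightarrow> bool" where
  "ultraproduct_is_I_plus_0 U T \<longleftrightarrow>
     (\<forall>x::'a. ueq U (\<lambda>n. blinfun_apply (T n) x) (\<lambda>n. x)) \<and>
     (\<forall>y. bounded_seq y \<and> weak_ulim U y 0 \<longrightarrow> ueq U (\<lambda>n. blinfun_apply (T n) (y n)) (\<lambda>n. 0))"

end

theory Submission
  imports Defs
begin

lemma span_breakdown_real:
  fixes x :: "'a::real_normed_vector"
  shows "z \<in> span (insert x S) \<longleftrightarrow> (\<exists>t. z - t *\<^sub>R x \<in> span S)"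
  by (simp add: span_breakdown_eq)

lemma closed_span_finite:
  fixes S :: "'a::banach set"
  assumes "finite S"
  shows "closed (span S)"
  using assms
proof (induction S rule: finite_induct)
  case empty
  then show ?case by simp
next
  case (insert x S)
  show ?case
  proof (cases "x \<in> span S")
    case True
    then have "span (insert x S) = span S" by (simp add: span_redundant)
    then show ?thesis using insert by simp
  next
    case False
    have ne: "span S \<noteq> {}" using span_zero by blast
    define d where "d = infdist x (span S)"
    have dpos: "d > 0" unfolding d_def
      using infdist_pos_not_in_closed[OF insert.IH ne False] .
    have key: "\<bar>t\<bar> * d \<le> norm (t *\<^sub>R x + s)" if "s \<in> span S" for t s
    proof (cases "t = 0")
      case True then show ?thesis by simp
    next
      case False
      have "(- (1/t)) *\<^sub>R s \<in> span S" using that by (simp add: span_mul span_neg)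
      then have "d \<le> dist x ((- (1/t)) *\<^sub>R s)" unfolding d_def by (rule infdist_le)
      also have "\<dots> = norm (x + (1/t) *\<^sub>R s)" by (simp add: dist_norm)
      finally have "\<bar>t\<bar> * d \<le> \<bar>t\<bar> * norm (x + (1/t) *\<^sub>R s)"
        by (simp add: mult_left_mono)
      also have "\<dots> = norm (t *\<^sub>R (x + (1/t) *\<^sub>R s))" by simp
      also have "t *\<^sub>R (x + (1/t) *\<^sub>R s) = t *\<^sub>R x + s"
        using False by (simp add: scaleR_add_right)
      finally show ?thesis .
    qed
    show ?thesis unfolding closed_sequential_limits
    proof (intro allI impI)
      fix z l
      assume a: "(\<forall>n. z n \<in> span (insert x S)) \<and> z \<longlonglongrightarrow> l"
      have "\<forall>n. \<exists>t. z n - t *\<^sub>R x \<in> span S" using a span_breakdown_real by blast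
      then obtain t where t: "\<And>n. z n - t n *\<^sub>R x \<in> span S" by metis
      have "Cauchy z" using a LIMSEQ_imp_Cauchy by blast
      have "Cauchy t"
      proof (rule metric_CauchyI)
        fix e :: real assume "e > 0"
        then obtain N where N: "\<And>m n. m \<ge> N \<Longrightarrow> n \<ge> N \<Longrightarrow> dist (z m) (z n) < e * d"
          using \<open>Cauchy z\<close> dpos unfolding Cauchy_def by (meson mult_pos_pos)
        show "\<exists>M. \<forall>m\<ge>M. \<forall>n\<ge>M. dist (t m) (t n) < e"
        proof (intro exI allI impI)
          fix m n assume "m \<ge> N" "n \<ge> N"
          have s: "(z m - t m *\<^sub>R x) - (z n - t n *\<^sub>R x) \<in> span S"
            using t by (simp add: span_diff)
          have "\<bar>t m - t n\<bar> * d \<le> norm ((t m - t n) *\<^sub>R x + ((z m - t m *\<^sub>R x) - (z n - t n *\<^sub>R x)))"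
            by (rule key[OF s])
          also have "(t m - t n) *\<^sub>R x + ((z m - t m *\<^sub>R x) - (z n - t n *\<^sub>R x)) = z m - z n"
            by (simp add: algebra_simps)
          also have "norm (z m - z n) < e * d" using N[OF \<open>m \<ge> N\<close> \<open>n \<ge> N\<close>] by (simp add: dist_norm)
          finally show "dist (t m) (t n) < e" using dpos by (simp add: dist_norm)
        qed
      qed
      then obtain \<tau> where tau: "t \<longlonglongrightarrow> \<tau>" using Cauchy_convergent_iff convergent_def by blast
      have "(\<lambda>n. z n - t n *\<^sub>R x) \<longlonglongrightarrow> l - \<tau> *\<^sub>R x"
        using a tau by (intro tendsto_intros) auto
      then show "l \<in> span (insert x S)"
        using insert.IH t span_breakdown_real unfolding closed_sequential_limits
        by (metis (no_types, lifting))
    qed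
  qed
qed

lemma riesz:
  fixes S :: "'a::banach set"
  assumes "finite S" "span S \<noteq> UNIV"
  shows "\<exists>e. norm e \<le> 1 \<and> (\<forall>s\<in>span S. 1/2 \<le> norm (e - s))"
proof -
  obtain v where v: "v \<notin> span S" using assms(2) by blast
  have ne: "span S \<noteq> {}" using span_zero by blast
  define d where "d = infdist v (span S)"
  have dpos: "d > 0" unfolding d_def
    using infdist_pos_not_in_closed[OF closed_span_finite[OF assms(1)] ne v] .
  have "(INF a\<in>span S. dist v a) < 2 * d"
    using dpos ne by (simp add: d_def infdist_notempty)
  then obtain s0 where s0: "s0 \<in> span S" "dist v s0 < 2 * d"
    using ne by (subst (asm) cINF_less_iff) (auto intro: bdd_belowI2[where m=0])
  define c where "c = norm (v - s0)"
  have cpos: "c > 0" using s0 v unfolding c_def by auto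
  define e where "e = (1/c) *\<^sub>R (v - s0)"
  have "norm e \<le> 1" using cpos by (simp add: e_def c_def)
  moreover have "1/2 \<le> norm (e - s)" if s: "s \<in> span S" for s
  proof -
    have "s0 + c *\<^sub>R s \<in> span S" using s s0 by (simp add: span_add span_mul)
    then have "d \<le> dist v (s0 + c *\<^sub>R s)" unfolding d_def by (rule infdist_le)
    also have "\<dots> = norm (c *\<^sub>R (e - s))"
      using cpos by (simp add: e_def dist_norm algebra_simps)
    also have "\<dots> = c * norm (e - s)" using cpos by simp
    finally have "d \<le> c * norm (e - s)" .
    moreover have "c < 2 * d" using s0 by (simp add: c_def dist_norm)
    moreover have "c * norm (e - s) \<le> (2*d) * norm (e - s)"
      using \<open>c < 2*d\<close> by (intro mult_right_mono) auto
    ultimately have "d * 1 \<le> d * (2 * norm (e - s))" by simp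
    then have "1 \<le> 2 * norm (e - s)" using dpos by (subst (asm) mult_le_cancel_left_pos) auto
    then show ?thesis by simp
  qed
  ultimately show ?thesis by blast
qed


definition Uf :: "nat set set \<Rightarrow> nat filter" where
  "Uf U = Abs_filter (\<lambda>P. {n. P n} \<in> U)"

lemma eventually_Uf:
  assumes "is_ultrafilter U"
  shows "eventually P (Uf U) \<longleftrightarrow> {n. P n} \<in> U"
  unfolding Uf_def
proof (rule eventually_Abs_filter)
  show "is_filter (\<lambda>P. {n. P n} \<in> U)"
  proof
    show "{n. True} \<in> U" using assms by (simp add: is_ultrafilter_def)
  next
    fix P Q assume "{n. P n} \<in> U" "{n. Q n} \<in> U"
    then have "{n. P n} \<inter> {n. Q n} \<in> U" using assms by (simp add: is_ultrafilter_def)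
    then show "{n. P n \<and> Q n} \<in> U" by (simp add: Collect_conj_eq)
  next
    fix P Q assume "\<forall>x. P x \<longrightarrow> Q x" "{n. P n} \<in> U"
    then show "{n. Q n} \<in> U" using assms unfolding is_ultrafilter_def
      by (metis (mono_tags, lifting) mem_Collect_eq subsetI)
  qed
qed

lemma Uf_nontriv:
  assumes "is_ultrafilter U"
  shows "\<not> trivial_limit (Uf U)"
  unfolding trivial_limit_def using assms by (simp add: eventually_Uf is_ultrafilter_def)

lemma U_nonempty: "is_ultrafilter U \<Longrightarrow> A \<in> U \<Longrightarrow> \<exists>n. n \<in> A"
  unfolding is_ultrafilter_def by (metis equals0I)

lemma U_int: "is_ultrafilter U \<Longrightarrow> A \<in> U \<Longrightarrow> B \<in> U \<Longrightarrow> A \<inter> B \<in> U"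
  unfolding is_ultrafilter_def by auto

lemma U_mono: "is_ultrafilter U \<Longrightarrow> A \<in> U \<Longrightarrow> A \<subseteq> B \<Longrightarrow> B \<in> U"
  unfolding is_ultrafilter_def by auto

lemma U_compl: "is_ultrafilter U \<Longrightarrow> A \<notin> U \<Longrightarrow> - A \<in> U"
  unfolding is_ultrafilter_def by auto

lemma finite_notin_U:
  assumes "is_ultrafilter U" "nonprincipal U" "finite S"
  shows "S \<notin> U"
  using assms(3)
proof (induction S rule: finite_induct)
  case empty then show ?case using assms(1) by (simp add: is_ultrafilter_def)
next
  case (insert x S)
  show ?case
  proof
    assume a: "insert x S \<in> U"
    have "- {x} \<in> U" using assms U_compl nonprincipal_def by blast
    then have "insert x S \<inter> - {x} \<in> U" using U_int[OF assms(1) a] by blast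
    then have "S \<in> U" using U_mono[OF assms(1)] by blast
    then show False using insert by blast
  qed
qed

lemma tendsto_Uf_iff:
  assumes "is_ultrafilter U"
  shows "(f \<longlongrightarrow> l) (Uf U) \<longleftrightarrow> (\<forall>e>0. {n. dist (f n) l < e} \<in> U)"
  by (simp add: tendsto_iff eventually_Uf[OF assms])

lemma ueq_iff:
  assumes "is_ultrafilter U"
  shows "ueq U x y \<longleftrightarrow> ((\<lambda>n. x n - y n) \<longlongrightarrow> 0) (Uf U)"
  by (simp add: ueq_def tendsto_Uf_iff[OF assms] dist_norm)

lemma weak_ulim_iff:
  fixes x :: "nat \<Rightarrow> 'a::real_normed_vector"
  assumes "is_ultrafilter U"
  shows "weak_ulim U x l \<longleftrightarrow> (\<forall>f::'a\<Rightarrow>\<^sub>L real. ((\<lambda>n. blinfun_apply f (x n)) \<longlongrightarrow> blinfun_apply f l) (Uf U))"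
  unfolding weak_ulim_def tendsto_Uf_iff[OF assms] dist_real_def by simp

lemma ulim_ex:
  fixes a :: "nat \<Rightarrow> real"
  assumes U: "is_ultrafilter U" and M: "\<And>n. \<bar>a n\<bar> \<le> M"
  shows "\<exists>L. (a \<longlongrightarrow> L) (Uf U)"
proof -
  define S where "S = {t. {n. t \<le> a n} \<in> U}"
  have "-M \<le> a n" for n using abs_le_D2[OF M[of n]] by linarith
  then have "{n. -M \<le> a n} = UNIV" by auto
  then have "-M \<in> S" using U unfolding S_def is_ultrafilter_def by simp
  then have Sne: "S \<noteq> {}" by blast
  have Sb: "t \<le> M" if "t \<in> S" for t
  proof (rule ccontr)
    assume "\<not> t \<le> M"
    then have "a n < t" for n using abs_le_D1[OF M[of n]] by linarith
    then have "{n. t \<le> a n} = {}" using leD by blast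
    then show False using that U unfolding S_def is_ultrafilter_def by auto
  qed
  then have bdd: "bdd_above S" by (meson bdd_aboveI)
  define L where "L = Sup S"
  have "(a \<longlongrightarrow> L) (Uf U)"
    unfolding tendsto_Uf_iff[OF U]
  proof (intro allI impI)
    fix e :: real assume e: "e > 0"
    have "L - e/2 < Sup S" using e L_def by simp
    then obtain s where s: "s \<in> S" "L - e/2 < s" using less_cSup_iff[OF Sne bdd] by blast
    have "L + e/2 \<notin> S" using cSup_upper[OF _ bdd] e L_def by force
    then have c: "- {n. L + e/2 \<le> a n} \<in> U" using U U_compl S_def by blast
    have "{n. s \<le> a n} \<inter> - {n. L + e/2 \<le> a n} \<in> U" using U_int[OF U _ c] s S_def by blast
    moreover have "{n. s \<le> a n} \<inter> - {n. L + e/2 \<le> a n} \<subseteq> {n. dist (a n) L < e}"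
      using s e by (auto simp: dist_real_def)
    ultimately show "{n. dist (a n) L < e} \<in> U" using U_mono[OF U] by blast
  qed
  then show ?thesis by blast
qed

lemma weak_lim_ex:
  fixes y :: "nat \<Rightarrow> 'a::banach"
  assumes U: "is_ultrafilter U" and refl: "reflexive_space TYPE('a)"
    and M: "\<And>n. norm (y n) \<le> M"
  shows "\<exists>w. \<forall>f::'a\<Rightarrow>\<^sub>L real. ((\<lambda>n. blinfun_apply f (y n)) \<longlongrightarrow> blinfun_apply f w) (Uf U)"
proof -
  have nt: "\<not> trivial_limit (Uf U)" using Uf_nontriv[OF U] .
  define \<phi> where "\<phi> f = Lim (Uf U) (\<lambda>n. blinfun_apply f (y n))" for f :: "'a \<Rightarrow>\<^sub>L real"
  have bnd: "\<bar>blinfun_apply f (y n)\<bar> \<le> norm f * M" for f n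
  proof -
    have "\<bar>blinfun_apply f (y n)\<bar> \<le> norm f * norm (y n)" using norm_blinfun[of f "y n"] by simp
    also have "\<dots> \<le> norm f * M" using M[of n] by (intro mult_left_mono) auto
    finally show ?thesis .
  qed
  have tl: "((\<lambda>n. blinfun_apply f (y n)) \<longlongrightarrow> \<phi> f) (Uf U)" for f
  proof -
    obtain L where L: "((\<lambda>n. blinfun_apply f (y n)) \<longlongrightarrow> L) (Uf U)"
      using ulim_ex[OF U, of "\<lambda>n. blinfun_apply f (y n)" "norm f * M"] bnd by blast
    have "\<phi> f = L" unfolding \<phi>_def by (rule tendsto_Lim[OF nt L])
    then show ?thesis using L by simp
  qed
  have "bounded_linear \<phi>"
  proof (rule bounded_linear_intro)
    fix f g
    have "((\<lambda>n. blinfun_apply (f + g) (y n)) \<longlongrightarrow> \<phi> f + \<phi> g) (Uf U)"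
      using tendsto_add[OF tl[of f] tl[of g]] by (simp add: plus_blinfun.rep_eq)
    then show "\<phi> (f + g) = \<phi> f + \<phi> g" using tendsto_unique[OF nt tl] by blast
  next
    fix r :: real and f
    have "((\<lambda>n. blinfun_apply (r *\<^sub>R f) (y n)) \<longlongrightarrow> r *\<^sub>R \<phi> f) (Uf U)"
      using tendsto_scaleR[OF tendsto_const[of r] tl[of f]] by (simp add: scaleR_blinfun.rep_eq)
    then show "\<phi> (r *\<^sub>R f) = r *\<^sub>R \<phi> f" using tendsto_unique[OF nt tl] by blast
  next
    fix f
    show "norm (\<phi> f) \<le> norm f * M"
      by (rule Lim_norm_ubound[OF nt tl]) (use bnd in simp)
  qed
  then obtain w where w: "\<forall>f. blinfun_apply (Blinfun \<phi>) f = blinfun_apply f w"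
    using refl unfolding reflexive_space_def by blast
  then have "\<forall>f. \<phi> f = blinfun_apply f w"
    using bounded_linear_Blinfun_apply[OF \<open>bounded_linear \<phi>\<close>] by simp
  then show ?thesis using tl by metis
qed


definition pick :: "'a::banach set \<Rightarrow> 'a" where
  "pick S = (SOME x. norm x \<le> 1 \<and> (\<forall>s\<in>span S. 1/2 \<le> norm (x - s)))"

primrec gset :: "nat \<Rightarrow> 'a::banach set" where
  "gset 0 = {}"
| "gset (Suc k) = insert (pick (gset k)) (gset k)"

lemma gset_finite: "finite (gset k)"
  by (induction k) auto

lemma gset_mono: "j \<le> k \<Longrightarrow> gset j \<subseteq> gset k"
proof (induction k)
  case 0 then show ?case by simp
next
  case (Suc k) then show ?case by (auto simp: le_Suc_eq)
qed

lemma sep_seq: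
  assumes "infinite_dimensional TYPE('a::banach)"
  shows "\<exists>e::nat \<Rightarrow> 'a. (\<forall>k. norm (e k) \<le> 1) \<and> (\<forall>j k. j \<noteq> k \<longrightarrow> 1/2 \<le> norm (e j - e k))"
proof -
  define e :: "nat \<Rightarrow> 'a" where "e k = pick (gset k)" for k
  have P: "norm (e k) \<le> 1 \<and> (\<forall>s\<in>span (gset k). 1/2 \<le> norm (e k - s))" for k
  proof -
    have "span (gset k :: 'a set) \<noteq> UNIV"
      using assms gset_finite unfolding infinite_dimensional_def by blast
    then have "\<exists>x::'a. norm x \<le> 1 \<and> (\<forall>s\<in>span (gset k). 1/2 \<le> norm (x - s))"
      by (rule riesz[where S="gset k :: 'a set", OF gset_finite])
    then show ?thesis unfolding e_def pick_def by (rule someI_ex)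
  qed
  have lt: "1/2 \<le> norm (e k - e j)" if "j < k" for j k
  proof -
    have "e j \<in> gset (Suc j)" by (simp add: e_def)
    then have "e j \<in> gset k" using gset_mono[of "Suc j" k] that by auto
    then show ?thesis using P[of k] span_base by blast
  qed
  have "\<forall>j k. j \<noteq> k \<longrightarrow> 1/2 \<le> norm (e j - e k)"
  proof (intro allI impI)
    fix j k :: nat assume "j \<noteq> k"
    then consider "j < k" | "k < j" by linarith
    then show "1/2 \<le> norm (e j - e k)"
    proof cases
      case 1 then show ?thesis using lt[of j k] by (simp add: norm_minus_commute)
    next
      case 2 then show ?thesis using lt[of k j] by simp
    qed
  qed
  then show ?thesis using P by blast
qed

theorem lemma6p4:
  fixes U :: "nat set set" and T :: "nat \<Rightarrow> ('a::banach \<Rightarrow>\<^sub>L 'a)"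
  assumes "is_ultrafilter U" and "nonprincipal U" and "selective U"
    and "infinite_dimensional TYPE('a)" and "reflexive_space TYPE('a)"
    and "\<exists>M. \<forall>n. norm (T n) \<le> M"
  shows "\<not> ultraproduct_is_I_plus_0 U T"
proof
  assume P: "ultraproduct_is_I_plus_0 U T"
  note U = assms(1)
  let ?F = "Uf U"
  have H1: "((\<lambda>n. T n x - x) \<longlongrightarrow> 0) ?F" for x
  proof -
    have "ueq U (\<lambda>n. T n x) (\<lambda>n. x)" using P unfolding ultraproduct_is_I_plus_0_def by blast
    then show ?thesis by (simp add: ueq_iff[OF U])
  qed
  have H2: "((\<lambda>n. T n (y n)) \<longlongrightarrow> 0) ?F" if "bounded_seq y" "weak_ulim U y 0" for y
  proof -
    have "ueq U (\<lambda>n. T n (y n)) (\<lambda>n. 0)" using P that unfolding ultraproduct_is_I_plus_0_def by blast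
    then show ?thesis by (simp add: ueq_iff[OF U])
  qed
  have K: "\<exists>w. ((\<lambda>n. T n (y n)) \<longlongrightarrow> w) ?F" if M: "\<And>n. norm (y n) \<le> M" for y M
  proof -
    obtain w where w: "\<forall>f::'a\<Rightarrow>\<^sub>L real. ((\<lambda>n. blinfun_apply f (y n)) \<longlongrightarrow> blinfun_apply f w) ?F"
      using weak_lim_ex[OF U assms(5), of y M] M by blast
    define z where "z n = y n - w" for n
    have "norm (z n) \<le> M + norm w" for n
    proof -
      have "norm (z n) \<le> norm (y n) + norm w" unfolding z_def by (rule norm_triangle_ineq4)
      then show ?thesis using M[of n] by linarith
    qed
    then have "bounded_seq z" unfolding bounded_seq_def by blast
    moreover have "weak_ulim U z 0" unfolding weak_ulim_iff[OF U]
    proof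
      fix f :: "'a \<Rightarrow>\<^sub>L real"
      have "((\<lambda>n. blinfun_apply f (y n) - blinfun_apply f w) \<longlongrightarrow> blinfun_apply f w - blinfun_apply f w) ?F"
        using tendsto_diff[OF w[rule_format, of f] tendsto_const] .
      then show "((\<lambda>n. blinfun_apply f (z n)) \<longlongrightarrow> blinfun_apply f 0) ?F"
        by (simp add: z_def blinfun.diff_right)
    qed
    ultimately have "((\<lambda>n. T n (z n)) \<longlongrightarrow> 0) ?F" using H2 by blast
    then have "((\<lambda>n. T n (z n) + (T n w - w) + w) \<longlongrightarrow> 0 + 0 + w) ?F"
      using H1[of w] by (intro tendsto_intros) auto
    then have "((\<lambda>n. T n (y n)) \<longlongrightarrow> w) ?F"
      by (simp add: z_def blinfun.diff_right)
    then show ?thesis by blast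
  qed
  obtain e :: "nat \<Rightarrow> 'a" where e1: "\<And>k. norm (e k) \<le> 1"
    and esep: "\<And>j k. j \<noteq> k \<Longrightarrow> 1/2 \<le> norm (e j - e k)"
    using sep_seq[OF assms(4)] by blast
  define A where "A j = {n. norm (T n (e j) - e j) < 1/8}" for j
  have AU: "A j \<in> U" for j
  proof -
    have "\<forall>\<epsilon>>0. {n. dist (T n (e j) - e j) 0 < \<epsilon>} \<in> U"
      using H1[of "e j"] unfolding tendsto_Uf_iff[OF U] .
    moreover have "(1/8::real) > 0" by simp
    ultimately have "{n. dist (T n (e j) - e j) 0 < 1/8} \<in> U" by blast
    then show ?thesis unfolding A_def by (simp add: dist_norm)
  qed
  obtain B where B: "B \<in> U" "\<And>j. finite (B - A j)"
    using assms(3) AU unfolding selective_def by blast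
  define k where "k n = Max {j. j \<le> n \<and> (\<forall>i\<le>j. n \<in> A i)}" for n
  have kA: "n \<in> A (k n)" if "n \<in> A 0" for n
  proof -
    let ?S = "{j. j \<le> n \<and> (\<forall>i\<le>j. n \<in> A i)}"
    have "finite ?S" by (rule finite_subset[of _ "{..n}"]) auto
    moreover have "0 \<in> ?S" using that by simp
    ultimately have "k n \<in> ?S" unfolding k_def by (intro Max_in) auto
    then show ?thesis by simp
  qed
  have Dfin: "finite ({n. k n = j} \<inter> B \<inter> A 0)" for j
  proof -
    have "{n. k n = j} \<inter> B \<inter> A 0 \<subseteq> {..j} \<union> (\<Union>i\<in>{..Suc j}. B - A i)"
    proof
      fix n assume n: "n \<in> {n. k n = j} \<inter> B \<inter> A 0"
      show "n \<in> {..j} \<union> (\<Union>i\<in>{..Suc j}. B - A i)"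
      proof (rule ccontr)
        assume "\<not> ?thesis"
        then have nj: "j < n" and allA: "\<forall>i\<le>Suc j. n \<in> A i" using n by auto
        let ?S = "{j. j \<le> n \<and> (\<forall>i\<le>j. n \<in> A i)}"
        have "finite ?S" by (rule finite_subset[of _ "{..n}"]) auto
        moreover have "Suc j \<in> ?S" using nj allA by auto
        ultimately have "Suc j \<le> k n" unfolding k_def by (rule Max_ge)
        then show False using n by simp
      qed
    qed
    moreover have "finite ({..j} \<union> (\<Union>i\<in>{..Suc j}. B - A i))"
      by (intro finite_UnI finite_UN_I) (auto intro: B(2))
    ultimately show ?thesis by (rule finite_subset)
  qed
  have DnU: "{n. k n = j} \<notin> U" for j
  proof
    assume "{n. k n = j} \<in> U"
    then have "{n. k n = j} \<inter> B \<inter> A 0 \<in> U" using U_int[OF U] B(1) AU by blast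
    then show False using finite_notin_U[OF U assms(2) Dfin] by blast
  qed
  obtain w where w: "((\<lambda>n. T n (e (k n))) \<longlongrightarrow> w) ?F"
    using K[of "\<lambda>n. e (k n)" 1] e1 by blast
  have W: "{n. norm (T n (e (k n)) - w) < 1/8} \<in> U"
  proof -
    have "(1/8::real) > 0" by simp
    then have "{n. dist (T n (e (k n))) w < 1/8} \<in> U" using w unfolding tendsto_Uf_iff[OF U] by blast
    then show ?thesis by (simp add: dist_norm)
  qed
  define C where "C = B \<inter> A 0 \<inter> {n. norm (T n (e (k n)) - w) < 1/8}"
  have CU: "C \<in> U" unfolding C_def using U_int[OF U] B(1) AU W by blast
  have close: "norm (e (k n) - w) < 1/4" if "n \<in> C" for n
  proof -
    have a: "norm (T n (e (k n)) - e (k n)) < 1/8" using kA[of n] that unfolding C_def A_def by auto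
    have b: "norm (T n (e (k n)) - w) < 1/8" using that unfolding C_def by auto
    have eq: "e (k n) - w = (T n (e (k n)) - w) - (T n (e (k n)) - e (k n))" by simp
    have "norm (e (k n) - w) \<le> norm (T n (e (k n)) - w) + norm (T n (e (k n)) - e (k n))"
      unfolding eq by (rule norm_triangle_ineq4)
    then show ?thesis using a b by linarith
  qed
  obtain n0 where n0: "n0 \<in> C" using U_nonempty[OF U CU] by blast
  have "- {n. k n = k n0} \<in> U" using U_compl[OF U DnU] .
  then have "C \<inter> - {n. k n = k n0} \<in> U" using U_int[OF U CU] by blast
  then obtain m where m: "m \<in> C" "k m \<noteq> k n0" using U_nonempty[OF U] by blast
  have "norm (e (k m) - e (k n0)) \<le> norm (e (k m) - w) + norm (e (k n0) - w)"
  proof -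
    have eq: "e (k m) - e (k n0) = (e (k m) - w) - (e (k n0) - w)" by simp
    show ?thesis unfolding eq by (rule norm_triangle_ineq4)
  qed
  also have "\<dots> < 1/2" using close[OF m(1)] close[OF n0] by linarith
  finally show False using esep[OF m(2)] by linarith
qed

end
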